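(* Let $f : \mathbb{R}^{n_1} \times \mathbb{R}^{n_2} \to \mathbb{R}^{n_3}$, $(u,v) \mapsto u*v$, be a bilinear map and let $q \in \mathbb{Z}_{\geq 0}$. The following are equivalent: (1) $Q(f) \leq q$; (2) for every integer $r \geq q$ and all $u_1,\ldots,u_r \in \mathbb{R}^{n_1}$, $v_1,\ldots,v_r \in \mathbb{R}^{n_2}$, setting \[ R := \{ \alpha \in \mathbb{R}^{[r]\times[r]} \mid \textstyle\sum_{i,j} \alpha_{ij}\, u_i * v_j = 0 \} \] and $\pi : \mathbb{R}^{[r]\times[r]} \to \mathbb{R}^r$, $\alpha \mapsto (\alpha_{11},\ldots,\alpha_{rr})$, we have $\dim \pi(R) \geq r - q$.
   Context: $[r] = \{1,\ldots,r\}$. For a bilinear map $f : \mathbb{R}^{n_1} \times \mathbb{R}^{n_2} \to \mathbb{R}^{n_3}$, its subrank $Q(f)$ is the largest $r$ such that there exist linear maps $\varphi_1 : \mathbb{R}^r \to \mathbb{R}^{n_1}$, $\varphi_2 : \mathbb{R}^r \to \mathbb{R}^{n_2}$, $\varphi_3 : \mathbb{R}^{n_3} \to \mathbb{R}^r$ with $\varphi_3(f(\varphi_1(a), \varphi_2(b))) = (a_1b_1,\ldots,a_rb_r)$ for all $a,b \in \mathbb{R}^r$. *)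

theory Defs
  imports "HOL-Analysis.Analysis" "HOL-Library.Function_Algebras"
begin

text \<open>Vectors of R^r are represented as functions nat => real (only the
coordinates i < r matter).\<close>

definition fscale :: "real \<Rightarrow> (nat \<Rightarrow> real) \<Rightarrow> (nat \<Rightarrow> real)" where
  "fscale c x = (\<lambda>i. c * x i)"

lemma vector_space_fscale: "vector_space fscale"
  by unfold_locales (auto simp: fscale_def fun_eq_iff algebra_simps)

definition fdim :: "(nat \<Rightarrow> real) set \<Rightarrow> nat" where
  "fdim S = vector_space.dim fscale S"

text \<open>A subrank witness of size r for the bilinear map f: linear maps
phi1 : R^r -> R^n1, a |-> sum_{i<r} a_i w1_i (every linear map from R^r has this form),
phi2 : R^r -> R^n2, b |-> sum_{i<r} b_i w2_i,
phi3 : R^n3 -> R^r, z |-> (L_0 z, ..., L_{r-1} z) with each L_i linear,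
such that phi3 (f (phi1 a) (phi2 b)) = (a_i b_i)_{i<r} for all a, b in R^r.\<close>

definition subrank_witness ::
  "(real^'a \<Rightarrow> real^'b \<Rightarrow> real^'c) \<Rightarrow> nat \<Rightarrow> bool" where
  "subrank_witness f r \<longleftrightarrow>
     (\<exists>(w1 :: nat \<Rightarrow> real^'a) (w2 :: nat \<Rightarrow> real^'b) (L :: nat \<Rightarrow> real^'c \<Rightarrow> real).
        (\<forall>i<r. linear (L i)) \<and>
        (\<forall>a b :: nat \<Rightarrow> real. \<forall>k<r.
           L k (f (\<Sum>i<r. a i *\<^sub>R w1 i) (\<Sum>j<r. b j *\<^sub>R w2 j)) = a k * b k))"

definition subrank :: "(real^'a \<Rightarrow> real^'b \<Rightarrow> real^'c) \<Rightarrow> nat" where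
  "subrank f = Max {r. subrank_witness f r}"

end

theory Submission
  imports Defs
begin

interpretation F: vector_space fscale by (rule vector_space_fscale)

lemma fun_sum_apply: "(\<Sum>i\<in>T. (g i :: nat \<Rightarrow> real)) j = (\<Sum>i\<in>T. g i j)"
  by (induction T rule: infinite_finite_induct) auto

lemma disjoint_span_zero:
  assumes ind: "F.independent B" and fin: "finite B" and sub: "B0 \<subseteq> B"
    and x0: "x \<in> F.span B0" and x1: "x \<in> F.span (B - B0)"
  shows "x = 0"
proof -
  have fB0: "finite B0" using fin sub finite_subset by blast
  obtain c where c: "x = (\<Sum>v\<in>B0. fscale (c v) v)" using x0 F.span_finite[OF fB0] by auto
  obtain d where d: "x = (\<Sum>v\<in>B - B0. fscale (d v) v)" using x1 F.span_finite[of "B - B0"] fin by auto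
  define w where "w v = (if v \<in> B0 then c v else - d v)" for v
  have "(\<Sum>v\<in>B. fscale (w v) v) = (\<Sum>v\<in>B0. fscale (w v) v) + (\<Sum>v\<in>B - B0. fscale (w v) v)"
    using sum.subset_diff[OF sub fin] by (simp add: add.commute)
  also have "(\<Sum>v\<in>B0. fscale (w v) v) = x" unfolding c w_def by (rule sum.cong) auto
  also have "(\<Sum>v\<in>B - B0. fscale (w v) v) = - x" unfolding d w_def
    by (simp add: F.scale_minus_left sum_negf)
  finally have "(\<Sum>v\<in>B. fscale (w v) v) = 0" by (simp add: zero_fun_def)
  then have "\<forall>v\<in>B. w v = 0" using F.independentD[OF ind fin subset_refl] by blast
  then have "\<forall>v\<in>B0. c v = 0" using sub unfolding w_def by (metis subsetD)
  then show ?thesis unfolding c by simp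
qed

definition ev :: "nat \<Rightarrow> nat \<Rightarrow> real" where "ev i = (\<lambda>j. if j = i then 1 else 0)"

lemma supp_in_span:
  assumes "finite T" "\<forall>i. i \<notin> T \<longrightarrow> x i = 0"
  shows "x \<in> F.span (ev ` T)"
proof -
  have "x = (\<Sum>i\<in>T. fscale (x i) (ev i))"
  proof
    fix j
    show "x j = (\<Sum>i\<in>T. fscale (x i) (ev i)) j"
    proof -
      have "(\<Sum>i\<in>T. fscale (x i) (ev i)) j = (\<Sum>i\<in>T. if i = j then x j else 0)"
        by (simp add: fun_sum_apply fscale_def ev_def) (rule sum.cong, auto)
      then show ?thesis using assms by (cases "j \<in> T") simp_all
    qed
  qed
  also have "\<dots> \<in> F.span (ev ` T)"
    by (intro F.span_sum F.span_scale F.span_base) auto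
  finally show ?thesis .
qed

lemma inj_ev: "inj ev" unfolding ev_def inj_def by (metis zero_neq_one)

lemma ev_indep: "F.independent (ev ` T)"
proof
  assume "F.dependent (ev ` T)"
  then obtain t u v where t: "finite t" "t \<subseteq> ev ` T" "(\<Sum>v\<in>t. fscale (u v) v) = 0" and v: "v \<in> t" "u v \<noteq> 0"
    unfolding F.dependent_explicit by blast
  obtain i where i: "v = ev i" using v t(2) by blast
  have "0 = (\<Sum>w\<in>t. fscale (u w) w) i" using t(3) by simp
  also have "\<dots> = (\<Sum>w\<in>t. u w * w i)" by (simp add: fun_sum_apply fscale_def)
  also have "\<dots> = (\<Sum>w\<in>t. if w = v then u v else 0)"
  proof (rule sum.cong)
    fix w assume "w \<in> t"
    then obtain j where wj: "w = ev j" using t(2) by blast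
    show "u w * w i = (if w = v then u v else 0)"
    proof (cases "i = j")
      case True then show ?thesis using i wj by (simp add: ev_def)
    next
      case False then have "w \<noteq> v" using i wj inj_ev by (metis injD)
      then show ?thesis using False wj by (simp add: ev_def)
    qed
  qed simp
  also have "\<dots> = u v" using t(1) v(1) by simp
  finally show False using v(2) by simp
qed

lemma greedy:
  fixes P :: "(nat \<Rightarrow> real) set"
  assumes supp: "\<forall>x\<in>P. \<forall>i\<ge>r. x i = 0"
  shows "\<exists>S \<subseteq> {..<r}. r \<le> card S + fdim P \<and> (\<forall>x\<in>P. (\<forall>i. i \<notin> S \<longrightarrow> x i = 0) \<longrightarrow> x = 0)"
proof -
  define E where "E = ev ` {..<r}"
  have injev: "inj ev" unfolding ev_def inj_def by (metis zero_neq_one)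
  have PE: "P \<subseteq> F.span E" unfolding E_def using supp
    by (auto intro!: supp_in_span) (meson not_le)
  obtain B0 where B0: "B0 \<subseteq> P" "F.independent B0" "P \<subseteq> F.span B0" "card B0 = F.dim P"
    using F.basis_exists by blast
  have fE: "finite E" unfolding E_def by simp
  have fB0: "finite B0" using F.independent_span_bound[OF fE B0(2)] B0(1) PE by blast
  obtain B where B: "B0 \<subseteq> B" "B \<subseteq> B0 \<union> E" "F.independent B" "B0 \<union> E \<subseteq> F.span B"
    using F.maximal_independent_subset_extend[of B0 "B0 \<union> E"] B0(2) by blast
  have fB: "finite B" using B(2) fB0 fE finite_subset by blast
  have cE: "card E = r" unfolding E_def using injev by (simp add: card_image inj_on_subset)
  have "card E \<le> card B" using F.independent_span_bound[OF fB ev_indep[of "{..<r}"]] B(4) E_def by auto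
  define S where "S = {i. i < r \<and> ev i \<in> B - B0}"
  have eS: "ev ` S = B - B0" unfolding S_def using B(2) E_def by auto
  have cS: "card S = card (B - B0)" using eS injev by (metis card_image inj_on_subset subset_UNIV)
  have cB: "card B = card B0 + card (B - B0)"
    using fB B(1) by (metis card_Diff_subset add_diff_inverse_nat card_mono not_le finite_subset)
  show ?thesis
  proof (intro exI[of _ S] conjI ballI impI)
    show "S \<subseteq> {..<r}" unfolding S_def by auto
    show "r \<le> card S + fdim P" using cS cB cE \<open>card E \<le> card B\<close> B0(4) fdim_def by simp
    fix x assume x: "x \<in> P" "\<forall>i. i \<notin> S \<longrightarrow> x i = 0"
    have "x \<in> F.span (B - B0)" using supp_in_span[of S x] x(2) eS S_def by simp
    moreover have "x \<in> F.span B0" using x(1) B0(3) by blast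
    ultimately show "x = 0" using disjoint_span_zero[OF B(3) fB B(1)] by blast
  qed
qed

lemma sum_indicator_vec:
  fixes w :: "nat \<Rightarrow> 'x::real_vector"
  assumes "i < r"
  shows "(\<Sum>i'<r. (if i' = i then 1 else 0) *\<^sub>R w i') = w i"
proof -
  have "(\<Sum>i'<r. (if i' = i then 1 else 0) *\<^sub>R w i') = (\<Sum>i'<r. if i' = i then w i else 0)"
    by (rule sum.cong) auto
  then show ?thesis using assms by simp
qed

lemma witness_delta:
  fixes w1 :: "nat \<Rightarrow> 'x::real_vector" and w2 :: "nat \<Rightarrow> 'y::real_vector"
  assumes W: "\<forall>a b :: nat \<Rightarrow> real. \<forall>k<r.
           L k (f (\<Sum>i<r. a i *\<^sub>R w1 i) (\<Sum>j<r. b j *\<^sub>R w2 j)) = a k * b k"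
    and "i < r" "j < r" "k < r"
  shows "L k (f (w1 i) (w2 j)) = (if i = k \<and> j = k then 1 else 0)"
proof -
  have e1: "(\<Sum>i'<r. (if i' = i then 1 else 0) *\<^sub>R w1 i') = w1 i" using assms(2) by (rule sum_indicator_vec)
  have e2: "(\<Sum>i'<r. (if i' = j then 1 else 0) *\<^sub>R w2 i') = w2 j" using assms(3) by (rule sum_indicator_vec)
  have "L k (f (w1 i) (w2 j)) = (if k = i then 1 else 0) * (if k = j then 1 else 0)"
    using W[rule_format, of k "\<lambda>i'. if i' = i then 1 else 0" "\<lambda>i'. if i' = j then 1 else 0"] assms(4)
    unfolding e1 e2 by simp
  then show ?thesis by auto
qed

lemma witness_bound:
  fixes f :: "real^'a \<Rightarrow> real^'b \<Rightarrow> real^'c"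
  assumes "subrank_witness f r"
  shows "r \<le> CARD('c)"
proof -
  obtain w1 w2 L where lin: "\<forall>i<r. linear (L i)" and
    W: "\<forall>a b :: nat \<Rightarrow> real. \<forall>k<r.
           L k (f (\<Sum>i<r. a i *\<^sub>R w1 i) (\<Sum>j<r. b j *\<^sub>R w2 j)) = a k * b k"
    using assms unfolding subrank_witness_def by blast
  define g where "g k = f (w1 k) (w2 k)" for k
  have Lg: "L k (g k') = (if k' = k then 1 else 0)" if "k < r" "k' < r" for k k'
    using witness_delta[OF W that(2) that(2) that(1)] g_def by simp
  have inj: "inj_on g {..<r}"
  proof (rule inj_onI)
    fix k k' assume "k \<in> {..<r}" "k' \<in> {..<r}" "g k = g k'"
    then show "k = k'" using Lg[of k k'] Lg[of k k] by (metis lessThan_iff zero_neq_one)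
  qed
  have ind: "independent (g ` {..<r})"
    unfolding real_vector.independent_explicit_module
  proof (intro allI impI)
    fix t u v assume t: "finite t" "t \<subseteq> g ` {..<r}" "(\<Sum>v\<in>t. u v *\<^sub>R v) = 0" "v \<in> t"
    obtain k where k: "k < r" "v = g k" using t by blast
    have linLk: "linear (L k)" using lin k(1) by blast
    have "0 = L k (\<Sum>v\<in>t. u v *\<^sub>R v)" using t(3) by (simp add: linear_0[OF linLk])
    also have "\<dots> = (\<Sum>w\<in>t. u w * L k w)"
      by (simp add: real_vector.linear_sum[OF linLk] linear_cmul[OF linLk])
    also have "\<dots> = (\<Sum>w\<in>t. if w = v then u v else 0)"
    proof (rule sum.cong)
      fix w assume "w \<in> t"
      then obtain k' where k': "k' < r" "w = g k'" using t(2) by blast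
      show "u w * L k w = (if w = v then u v else 0)"
        using Lg[OF k(1) k'(1)] k k' inj_on_eq_iff[OF inj, of k k'] by auto
    qed simp
    also have "\<dots> = u v" using t(1) t(4) by simp
    finally show "u v = 0" by simp
  qed
  have "card (g ` {..<r}) \<le> DIM(real^'c)" using independent_bound[OF ind] by simp
  moreover have "card (g ` {..<r}) = r" using card_image[OF inj] by simp
  ultimately show ?thesis by simp
qed

lemma finite_witness:
  fixes f :: "real^'a \<Rightarrow> real^'b \<Rightarrow> real^'c"
  shows "finite {r. subrank_witness f r}"
proof -
  have "{r. subrank_witness f r} \<subseteq> {..CARD('c)}" using witness_bound[of f] by blast
  then show ?thesis using finite_subset by blast
qed
lemma span_image_finite:
  fixes h :: "'i \<Rightarrow> 'x::real_vector"
  assumes "finite I" "x \<in> span (h ` I)"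
  shows "\<exists>c. x = (\<Sum>p\<in>I. c p *\<^sub>R h p)"
proof (rule real_vector.span_induct_alt[where h="\<lambda>x. \<exists>c. x = (\<Sum>p\<in>I. c p *\<^sub>R h p)", OF assms(2)])
  show "\<exists>c. 0 = (\<Sum>p\<in>I. c p *\<^sub>R h p)" by (intro exI[of _ "\<lambda>_. 0"]) simp
next
  fix c x y assume x: "x \<in> h ` I" and "\<exists>c. y = (\<Sum>p\<in>I. c p *\<^sub>R h p)"
  then obtain p0 where p0: "p0 \<in> I" "x = h p0" by blast
  from \<open>\<exists>c. y = _\<close> obtain c' where c': "y = (\<Sum>p\<in>I. c' p *\<^sub>R h p)" by blast
  have "(\<Sum>p\<in>I. (if p = p0 then c else 0) *\<^sub>R h p) = (\<Sum>p\<in>I. if p = p0 then c *\<^sub>R h p0 else 0)"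
    by (rule sum.cong) auto
  then have "c *\<^sub>R x + y = (\<Sum>p\<in>I. (if p = p0 then c else 0) *\<^sub>R h p) + (\<Sum>p\<in>I. c' p *\<^sub>R h p)"
    using p0 assms(1) c' by simp
  also have "\<dots> = (\<Sum>p\<in>I. ((if p = p0 then c else 0) + c' p) *\<^sub>R h p)"
    by (simp add: sum.distrib scaleR_add_left)
  finally have eq: "c *\<^sub>R x + y = (\<Sum>p\<in>I. ((if p = p0 then c else 0) + c' p) *\<^sub>R h p)" .
  show "\<exists>c''. c *\<^sub>R x + y = (\<Sum>p\<in>I. c'' p *\<^sub>R h p)" by (rule exI, rule eq)
qed


lemma construct:
  fixes f :: "real^'a \<Rightarrow> real^'b \<Rightarrow> real^'c" and u :: "nat \<Rightarrow> real^'a" and v :: "nat \<Rightarrow> real^'b"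
  assumes bil: "bilinear f" and S: "S \<subseteq> {..<r}"
    and H: "\<And>\<alpha> k. (\<forall>i j. (i \<notin> S \<or> j \<notin> S) \<longrightarrow> \<alpha> i j = 0) \<Longrightarrow>
       (\<Sum>i<r. \<Sum>j<r. \<alpha> i j *\<^sub>R f (u i) (v j)) = 0 \<Longrightarrow> k \<in> S \<Longrightarrow> \<alpha> k k = 0"
  shows "subrank_witness f (card S)"
proof -
  have fS: "finite S" using S finite_subset by blast
  define s where "s = card S"
  obtain \<sigma> where \<sigma>: "bij_betw \<sigma> {..<s} S"
    using ex_bij_betw_nat_finite[OF fS] by (auto simp: s_def atLeast0LessThan)
  have \<sigma>S: "\<sigma> i \<in> S" if "i < s" for i using \<sigma> that bij_betwE by blast
  define g where "g i j = f (u (\<sigma> i)) (v (\<sigma> j))" for i j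
  have key: "\<exists>z. z \<bullet> g k k = 1 \<and> (\<forall>i<s. \<forall>j<s. (i,j) \<noteq> (k,k) \<longrightarrow> z \<bullet> g i j = 0)"
    if k: "k < s" for k
  proof -
    define I where "I = {..<s} \<times> {..<s} - {(k,k)}"
    define W where "W = (\<lambda>(i,j). g i j) ` I"
    have fI: "finite I" unfolding I_def by simp
    have notin: "g k k \<notin> span W"
    proof
      assume "g k k \<in> span W"
      then obtain c where c: "g k k = (\<Sum>p\<in>I. c p *\<^sub>R (\<lambda>(i,j). g i j) p)"
        using span_image_finite[OF fI] W_def by blast
      define \<beta> where "\<beta> i j = (if (i,j) = (k,k) then -1 else c (i,j))" for i j
      define \<tau> where "\<tau> = the_inv_into {..<s} \<sigma>"
      define \<alpha> where "\<alpha> a b = (if a \<in> S \<and> b \<in> S then \<beta> (\<tau> a) (\<tau> b) else 0)" for a b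
      have \<tau>\<sigma>: "\<tau> (\<sigma> i) = i" if "i < s" for i
        using \<sigma> that the_inv_into_f_f unfolding bij_betw_def \<tau>_def by (metis lessThan_iff)
      have "(\<Sum>a<r. \<Sum>b<r. \<alpha> a b *\<^sub>R f (u a) (v b)) = (\<Sum>a\<in>S. \<Sum>b<r. \<alpha> a b *\<^sub>R f (u a) (v b))"
        by (rule sum.mono_neutral_right) (use S fS in \<open>auto simp: \<alpha>_def\<close>)
      also have "\<dots> = (\<Sum>a\<in>S. \<Sum>b\<in>S. \<alpha> a b *\<^sub>R f (u a) (v b))"
        by (rule sum.cong[OF refl], rule sum.mono_neutral_right) (use S fS in \<open>auto simp: \<alpha>_def\<close>)
      also have "\<dots> = (\<Sum>i<s. \<Sum>j<s. \<alpha> (\<sigma> i) (\<sigma> j) *\<^sub>R f (u (\<sigma> i)) (v (\<sigma> j)))"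
        by (simp add: sum.reindex_bij_betw[OF \<sigma>, symmetric])
      also have "\<dots> = (\<Sum>i<s. \<Sum>j<s. \<beta> i j *\<^sub>R g i j)"
        by (intro sum.cong refl) (simp add: \<alpha>_def \<sigma>S \<tau>\<sigma> g_def)
      also have "\<dots> = (\<Sum>p\<in>{..<s} \<times> {..<s}. \<beta> (fst p) (snd p) *\<^sub>R g (fst p) (snd p))"
        by (simp add: sum.cartesian_product case_prod_beta)
      also have "\<dots> = \<beta> k k *\<^sub>R g k k + (\<Sum>p\<in>I. \<beta> (fst p) (snd p) *\<^sub>R g (fst p) (snd p))"
        unfolding I_def using k by (subst sum.remove[of _ "(k,k)"]) auto
      also have "(\<Sum>p\<in>I. \<beta> (fst p) (snd p) *\<^sub>R g (fst p) (snd p)) = (\<Sum>p\<in>I. c p *\<^sub>R (\<lambda>(i,j). g i j) p)"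
        by (rule sum.cong) (auto simp: I_def \<beta>_def)
      finally have sum0: "(\<Sum>a<r. \<Sum>b<r. \<alpha> a b *\<^sub>R f (u a) (v b)) = 0"
        using c by (simp add: \<beta>_def)
      have "\<alpha> (\<sigma> k) (\<sigma> k) = 0"
        by (rule H[OF _ sum0 \<sigma>S[OF k]]) (auto simp: \<alpha>_def)
      moreover have "\<alpha> (\<sigma> k) (\<sigma> k) = -1" using \<sigma>S[OF k] \<tau>\<sigma>[OF k] by (simp add: \<alpha>_def \<beta>_def)
      ultimately show False by simp
    qed
    obtain y z where y: "y \<in> span W" and z: "\<And>w. w \<in> span W \<Longrightarrow> orthogonal z w" and gy: "g k k = y + z"
      using orthogonal_subspace_decomp_exists by blast
    have "z \<noteq> 0" using notin y gy by auto
    have zg: "z \<bullet> g k k = z \<bullet> z" using z[OF y] gy by (simp add: orthogonal_def inner_add_right)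
    have zz: "z \<bullet> z \<noteq> 0" using \<open>z \<noteq> 0\<close> by simp
    show ?thesis
    proof (intro exI[of _ "(1 / (z \<bullet> z)) *\<^sub>R z"] conjI allI impI)
      show "(1 / (z \<bullet> z)) *\<^sub>R z \<bullet> g k k = 1" using zg zz by simp
      fix i j assume ij: "i < s" "j < s" "(i,j) \<noteq> (k,k)"
      then have "(i,j) \<in> I" by (simp add: I_def)
      then have "g i j \<in> W" unfolding W_def by (auto intro: rev_image_eqI)
      then have "g i j \<in> span W" by (rule span_base)
      then show "(1 / (z \<bullet> z)) *\<^sub>R z \<bullet> g i j = 0" using z by (simp add: orthogonal_def)
    qed
  qed
  have "\<forall>k. \<exists>z. k < s \<longrightarrow> z \<bullet> g k k = 1 \<and> (\<forall>i<s. \<forall>j<s. (i,j) \<noteq> (k,k) \<longrightarrow> z \<bullet> g i j = 0)"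
    using key by blast
  then obtain Z where Z: "\<And>k. k < s \<Longrightarrow> Z k \<bullet> g k k = 1 \<and> (\<forall>i<s. \<forall>j<s. (i,j) \<noteq> (k,k) \<longrightarrow> Z k \<bullet> g i j = 0)"
    by (metis choice)
  show ?thesis unfolding subrank_witness_def s_def[symmetric]
  proof (intro exI[of _ "\<lambda>i. u (\<sigma> i)"] exI[of _ "\<lambda>j. v (\<sigma> j)"] exI[of _ "\<lambda>k x. Z k \<bullet> x"] conjI allI impI)
    fix k assume "k < s"
    show "linear (\<lambda>x. Z k \<bullet> x)" by (rule bounded_linear.linear[OF bounded_linear_inner_right])
  next
    fix a b :: "nat \<Rightarrow> real" and k assume k: "k < s"
    have "Z k \<bullet> f (\<Sum>i<s. a i *\<^sub>R u (\<sigma> i)) (\<Sum>j<s. b j *\<^sub>R v (\<sigma> j))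
        = Z k \<bullet> (\<Sum>p\<in>{..<s}\<times>{..<s}. f (a (fst p) *\<^sub>R u (\<sigma> (fst p))) (b (snd p) *\<^sub>R v (\<sigma> (snd p))))"
      by (simp add: bilinear_sum[OF bil] case_prod_beta)
    also have "\<dots> = (\<Sum>p\<in>{..<s}\<times>{..<s}. a (fst p) * b (snd p) * (Z k \<bullet> g (fst p) (snd p)))"
      by (simp add: inner_sum_right bilinear_lmul[OF bil] bilinear_rmul[OF bil] g_def mult_ac)
    also have "\<dots> = (\<Sum>p\<in>{..<s}\<times>{..<s}. if p = (k,k) then a k * b k else 0)"
    proof (rule sum.cong[OF refl])
      fix p assume p: "p \<in> {..<s}\<times>{..<s}"
      show "a (fst p) * b (snd p) * (Z k \<bullet> g (fst p) (snd p)) = (if p = (k,k) then a k * b k else 0)"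
      proof (cases "p = (k,k)")
        case True then show ?thesis using Z[OF k] by simp
      next
        case False
        then have "Z k \<bullet> g (fst p) (snd p) = 0" using Z[OF k] p by (cases p) auto
        then show ?thesis using False by simp
      qed
    qed
    also have "\<dots> = a k * b k" using k by simp
    finally show "Z k \<bullet> f (\<Sum>i<s. a i *\<^sub>R u (\<sigma> i)) (\<Sum>j<s. b j *\<^sub>R v (\<sigma> j)) = a k * b k" .
  qed
qed

lemma fdim_zero:
  assumes P0: "P \<subseteq> {0}"
  shows "fdim P = 0"
proof -
  obtain B where B: "B \<subseteq> P" "F.independent B" "P \<subseteq> F.span B" "card B = F.dim P"
    by (rule F.basis_exists[of P])
  have "0 \<notin> B" using F.dependent_zero[of B] B(2) by blast
  moreover have "B \<subseteq> {0}" using B(1) P0 by (rule subset_trans)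
  ultimately have "B = {}" by blast
  then show "fdim P = 0" unfolding fdim_def using B(4) by simp
qed
theorem lemma5p2:
  fixes f :: "real^'a \<Rightarrow> real^'b \<Rightarrow> real^'c" and q :: nat
  assumes "bilinear f"
  shows "subrank f \<le> q \<longleftrightarrow>
    (\<forall>r\<ge>q. \<forall>(u :: nat \<Rightarrow> real^'a) (v :: nat \<Rightarrow> real^'b).
       fdim ((\<lambda>\<alpha>. \<lambda>i. if i < r then \<alpha> i i else 0) `
             {\<alpha> :: nat \<Rightarrow> nat \<Rightarrow> real.
                (\<forall>i j. (r \<le> i \<or> r \<le> j) \<longrightarrow> \<alpha> i j = 0) \<and>
                (\<Sum>i<r. \<Sum>j<r. \<alpha> i j *\<^sub>R f (u i) (v j)) = 0})
       \<ge> r - q)"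
proof -
  have fin: "finite {r. subrank_witness f r}" by (rule finite_witness)
  have w0: "subrank_witness f 0" unfolding subrank_witness_def by simp
  have le: "s \<le> subrank f" if "subrank_witness f s" for s
    unfolding subrank_def using fin that by (simp add: Max_ge)
  have mem: "subrank_witness f (subrank f)"
    unfolding subrank_def using Max_in[OF fin] w0 by blast
  show ?thesis
  proof
    assume Q: "subrank f \<le> q"
    show "\<forall>r\<ge>q. \<forall>(u :: nat \<Rightarrow> real^'a) (v :: nat \<Rightarrow> real^'b).
       fdim ((\<lambda>\<alpha>. \<lambda>i. if i < r then \<alpha> i i else 0) `
             {\<alpha> :: nat \<Rightarrow> nat \<Rightarrow> real.
                (\<forall>i j. (r \<le> i \<or> r \<le> j) \<longrightarrow> \<alpha> i j = 0) \<and>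
                (\<Sum>i<r. \<Sum>j<r. \<alpha> i j *\<^sub>R f (u i) (v j)) = 0})
       \<ge> r - q"
    proof (intro allI impI)
      fix r and u :: "nat \<Rightarrow> real^'a" and v :: "nat \<Rightarrow> real^'b"
      assume qr: "q \<le> r"
      define R where "R = {\<alpha> :: nat \<Rightarrow> nat \<Rightarrow> real.
                (\<forall>i j. (r \<le> i \<or> r \<le> j) \<longrightarrow> \<alpha> i j = 0) \<and>
                (\<Sum>i<r. \<Sum>j<r. \<alpha> i j *\<^sub>R f (u i) (v j)) = 0}"
      define P where "P = (\<lambda>\<alpha>. \<lambda>i. if i < r then \<alpha> i i else (0::real)) ` R"
      have "r - q \<le> fdim P"
      proof (rule ccontr)
        assume "\<not> r - q \<le> fdim P"
        then have lt: "fdim P < r - q" by simp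
        have supp: "\<forall>x\<in>P. \<forall>i\<ge>r. x i = 0" unfolding P_def by auto
        obtain S where S: "S \<subseteq> {..<r}" "r \<le> card S + fdim P"
          and Z: "\<forall>x\<in>P. (\<forall>i. i \<notin> S \<longrightarrow> x i = 0) \<longrightarrow> x = 0"
          using greedy[OF supp] by blast
        have "subrank_witness f (card S)"
        proof (rule construct[OF assms S(1)])
          fix \<alpha> :: "nat \<Rightarrow> nat \<Rightarrow> real" and k
          assume sa: "\<forall>i j. (i \<notin> S \<or> j \<notin> S) \<longrightarrow> \<alpha> i j = 0"
            and s0: "(\<Sum>i<r. \<Sum>j<r. \<alpha> i j *\<^sub>R f (u i) (v j)) = 0" and kS: "k \<in> S"
          have "\<forall>i j. (r \<le> i \<or> r \<le> j) \<longrightarrow> \<alpha> i j = 0"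
          proof (intro allI impI)
            fix i j assume "r \<le> i \<or> r \<le> j"
            then have "i \<notin> S \<or> j \<notin> S" using S(1) by auto
            then show "\<alpha> i j = 0" using sa by blast
          qed
          then have "\<alpha> \<in> R" unfolding R_def using s0 by blast
          then have inP: "(\<lambda>i. if i < r then \<alpha> i i else 0) \<in> P" unfolding P_def by blast
          have zS: "\<forall>i. i \<notin> S \<longrightarrow> (if i < r then \<alpha> i i else 0) = (0::real)" using sa by simp
          have "(\<lambda>i. if i < r then \<alpha> i i else 0) = 0"
            using Z[rule_format, OF inP] zS by simp
          then have "\<forall>i. (if i < r then \<alpha> i i else 0) = (0::real)" by (simp add: fun_eq_iff)
          then show "\<alpha> k k = 0" using kS S(1) by (metis lessThan_iff subsetD)
        qed
        then have "card S \<le> q" using le Q le_trans by blast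
        then show False using S(2) lt by linarith
      qed
      then show "r - q \<le> fdim ((\<lambda>\<alpha>. \<lambda>i. if i < r then \<alpha> i i else 0) `
             {\<alpha> :: nat \<Rightarrow> nat \<Rightarrow> real.
                (\<forall>i j. (r \<le> i \<or> r \<le> j) \<longrightarrow> \<alpha> i j = 0) \<and>
                (\<Sum>i<r. \<Sum>j<r. \<alpha> i j *\<^sub>R f (u i) (v j)) = 0})"
        unfolding P_def R_def .
    qed
  next
    assume H: "\<forall>r\<ge>q. \<forall>(u :: nat \<Rightarrow> real^'a) (v :: nat \<Rightarrow> real^'b).
       fdim ((\<lambda>\<alpha>. \<lambda>i. if i < r then \<alpha> i i else 0) `
             {\<alpha> :: nat \<Rightarrow> nat \<Rightarrow> real.
                (\<forall>i j. (r \<le> i \<or> r \<le> j) \<longrightarrow> \<alpha> i j = 0) \<and>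
                (\<Sum>i<r. \<Sum>j<r. \<alpha> i j *\<^sub>R f (u i) (v j)) = 0})
       \<ge> r - q"
    show "subrank f \<le> q"
    proof (rule ccontr)
      assume "\<not> subrank f \<le> q"
      then have qr: "q < subrank f" by simp
      define r where "r = subrank f"
      obtain w1 :: "nat \<Rightarrow> real^'a" and w2 :: "nat \<Rightarrow> real^'b" and L where
        lin: "\<forall>i<r. linear (L i)" and
        W: "\<forall>a b :: nat \<Rightarrow> real. \<forall>k<r.
           L k (f (\<Sum>i<r. a i *\<^sub>R w1 i) (\<Sum>j<r. b j *\<^sub>R w2 j)) = a k * b k"
        using mem unfolding subrank_witness_def r_def by blast
      define P where "P = (\<lambda>\<alpha>. \<lambda>i. if i < r then \<alpha> i i else (0::real)) `
             {\<alpha> :: nat \<Rightarrow> nat \<Rightarrow> real.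
                (\<forall>i j. (r \<le> i \<or> r \<le> j) \<longrightarrow> \<alpha> i j = 0) \<and>
                (\<Sum>i<r. \<Sum>j<r. \<alpha> i j *\<^sub>R f (w1 i) (w2 j)) = 0}"
      have "q \<le> r" using qr r_def by simp
      then have ge: "r - q \<le> fdim P" unfolding P_def by (rule H[rule_format])
      have P0: "P \<subseteq> {0}"
      proof
        fix x assume "x \<in> P"
        then obtain \<alpha> where x: "x = (\<lambda>i. if i < r then \<alpha> i i else 0)"
          and s0: "(\<Sum>i<r. \<Sum>j<r. \<alpha> i j *\<^sub>R f (w1 i) (w2 j)) = 0"
          unfolding P_def by blast
        have "\<alpha> k k = 0" if k: "k < r" for k
        proof -
          have linLk: "linear (L k)" using lin k by blast
          have "0 = L k (\<Sum>i<r. \<Sum>j<r. \<alpha> i j *\<^sub>R f (w1 i) (w2 j))"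
            using s0 by (simp add: linear_0[OF linLk])
          also have "\<dots> = (\<Sum>i<r. \<Sum>j<r. \<alpha> i j * L k (f (w1 i) (w2 j)))"
            by (simp add: real_vector.linear_sum[OF linLk] linear_cmul[OF linLk])
          also have "\<dots> = (\<Sum>i<r. if i = k then \<alpha> k k else 0)"
          proof (rule sum.cong[OF refl])
            fix i assume i: "i \<in> {..<r}"
            have "(\<Sum>j<r. \<alpha> i j * L k (f (w1 i) (w2 j))) = (\<Sum>j<r. if i = k \<and> j = k then \<alpha> k k else 0)"
            proof (rule sum.cong[OF refl])
              fix j assume j: "j \<in> {..<r}"
              have "L k (f (w1 i) (w2 j)) = (if i = k \<and> j = k then 1 else 0)"
                using i j k by (intro witness_delta[OF W]) auto
              then show "\<alpha> i j * L k (f (w1 i) (w2 j)) = (if i = k \<and> j = k then \<alpha> k k else 0)"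
                by simp
            qed
            also have "\<dots> = (if i = k then \<alpha> k k else 0)"
              using k by (cases "i = k") auto
            finally show "(\<Sum>j<r. \<alpha> i j * L k (f (w1 i) (w2 j))) = (if i = k then \<alpha> k k else 0)" .
          qed
          also have "\<dots> = \<alpha> k k" using k by simp
          finally show ?thesis by simp
        qed
        then have "x = 0" unfolding x by (simp add: fun_eq_iff)
        then show "x \<in> {0}" by simp
      qed
      have "fdim P = 0" using P0 by (rule fdim_zero)
      then show False using ge qr r_def by simp
    qed
  qed
qed
end
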